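(* Let $\mathcal{X}$ be a Banach space and $J:\mathcal{X}\to\mathbb{R}\cup\{\infty\}$ a convex, absolutely one-homogeneous functional. Let $v\in\mathcal{X}$ and $p\in\partial J(v)$. Then the set $$\mathcal{M}^{\mathrm{IC}}=\{u\in\mathcal{X}\ :\ [D_J^p(\cdot,v)\,\Box\, D_J^{-p}(\cdot,-v)](u)=0\}$$ is a nonempty linear subspace of $\mathcal{X}$.
   Context: Absolutely one-homogeneous: $J(\lambda u)=|\lambda|J(u)$ for all $\lambda\in\mathbb{R}$. Bregman distance: $D_J^{q}(u,w)=J(u)-J(w)-\langle q,u-w\rangle$ for $q\in\partial J(w)$ (note $-p\in\partial J(-v)$). The infimal convolution of $F,G:\mathcal{X}\to\mathbb{R}\cup\{\infty\}$ is $(F\Box G)(u)=\inf_{z\in\mathcal{X}}F(u-z)+G(z)$. *)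

theory Defs
  imports "HOL-Analysis.Analysis"
begin

text \<open>Functionals J : X -> R \<union> {\<infinity>} are modelled as maps into ereal that never take
  the value minus infinity.  The dual space X* is modelled by bounded linear functionals
  X \<Rightarrow>L real, with pairing blinfun_apply.\<close>

definition proper_ext :: "('a \<Rightarrow> ereal) \<Rightarrow> bool" where
  "proper_ext J \<longleftrightarrow> (\<forall>u. J u \<noteq> -\<infinity>)"

definition convex_ext :: "('a::real_vector \<Rightarrow> ereal) \<Rightarrow> bool" where
  "convex_ext J \<longleftrightarrow> (\<forall>u w (t::real). 0 \<le> t \<and> t \<le> 1 \<longrightarrow>
      J (t *\<^sub>R u + (1 - t) *\<^sub>R w) \<le> ereal t * J u + ereal (1 - t) * J w)"

definition abs_one_homogeneous :: "('a::real_vector \<Rightarrow> ereal) \<Rightarrow> bool" where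
  "abs_one_homogeneous J \<longleftrightarrow> (\<forall>(c::real) u. J (c *\<^sub>R u) = ereal \<bar>c\<bar> * J u)"

definition subdiff :: "('a::real_normed_vector \<Rightarrow> ereal) \<Rightarrow> 'a \<Rightarrow> ('a \<Rightarrow>\<^sub>L real) set" where
  "subdiff J v = {p. J v \<noteq> \<infinity> \<and> (\<forall>u. J v + ereal (blinfun_apply p (u - v)) \<le> J u)}"

definition bregman :: "('a::real_normed_vector \<Rightarrow> ereal) \<Rightarrow> ('a \<Rightarrow>\<^sub>L real) \<Rightarrow> 'a \<Rightarrow> 'a \<Rightarrow> ereal" where
  "bregman J q u w = J u - J w - ereal (blinfun_apply q (u - w))"

definition infconv :: "('a::real_vector \<Rightarrow> ereal) \<Rightarrow> ('a \<Rightarrow> ereal) \<Rightarrow> 'a \<Rightarrow> ereal" where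
  "infconv F G u = (INF z. F (u - z) + G z)"

end

theory Submission
  imports Defs
begin

theorem theorem4:
  fixes J :: "'a::banach \<Rightarrow> ereal" and v :: 'a and p :: "'a \<Rightarrow>\<^sub>L real"
  assumes "proper_ext J" and "convex_ext J" and "abs_one_homogeneous J"
    and "p \<in> subdiff J v"
  shows "{u. infconv (\<lambda>x. bregman J p x v) (\<lambda>x. bregman J (-p) x (-v)) u = 0} \<noteq> {}
     \<and> subspace {u. infconv (\<lambda>x. bregman J p x v) (\<lambda>x. bregman J (-p) x (-v)) u = 0}"
proof -
  have prp: "\<And>u. J u \<noteq> -\<infinity>" using assms(1) by (simp add: proper_ext_def)
  have hom: "\<And>c u. J (c *\<^sub>R u) = ereal \<bar>c\<bar> * J u" using assms(3) by (simp add: abs_one_homogeneous_def)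
  have cvx: "\<And>u w t. 0 \<le> t \<Longrightarrow> t \<le> 1 \<Longrightarrow> J (t *\<^sub>R u + (1 - t) *\<^sub>R w) \<le> ereal t * J u + ereal (1 - t) * J w"
    using assms(2) by (simp add: convex_ext_def)
  have J0: "J 0 = 0" using hom[of 0 0] by (simp add: zero_ereal_def[symmetric])
  have Jneg: "\<And>x. J (-x) = J x" using hom[of "-1"] by simp
  have Jsub: "J (a + b) \<le> J a + J b" for a b
  proof -
    have "J (a + b) = J ((1/2) *\<^sub>R (2 *\<^sub>R a) + (1 - 1/2) *\<^sub>R (2 *\<^sub>R b))"
      by (simp add: scaleR_add_right[symmetric])
    also have "\<dots> \<le> ereal (1/2) * J (2 *\<^sub>R a) + ereal (1 - 1/2) * J (2 *\<^sub>R b)"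
      by (rule cvx) auto
    also have "\<dots> = J a + J b" unfolding hom
      using prp[of a] prp[of b]
      by (cases "J a"; cases "J b") auto
    finally show ?thesis .
  qed
  from assms(4) have Jvne: "J v \<noteq> \<infinity>" and sd: "\<And>u. J v + ereal (p (u - v)) \<le> J u"
    by (auto simp: subdiff_def)
  obtain jv where jv: "J v = ereal jv" using Jvne prp[of v] by (cases "J v") auto
  have "ereal jv + ereal (p (0 - v)) \<le> 0" using sd[of 0] jv J0 by simp
  hence a1: "jv - p v \<le> 0" by (simp add: blinfun.diff_right blinfun.minus_right)
  have "ereal jv + ereal (p (2 *\<^sub>R v - v)) \<le> ereal (2 * jv)" using sd[of "2 *\<^sub>R v"] jv hom[of 2 v] by simp
  hence a2: "p v \<le> jv" by (simp add: blinfun.diff_right blinfun.scaleR_right)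
  have pv: "p v = jv" using a1 a2 by simp
  have ple: "ereal (p u) \<le> J u" for u
    using sd[of u] jv pv by (simp add: blinfun.diff_right)
  define D1 where "D1 x = J x - ereal (p x)" for x
  define D2 where "D2 x = J x + ereal (p x)" for x
  have B1: "bregman J p x v = D1 x" for x
    unfolding bregman_def D1_def jv using pv
    by (cases "J x") (auto simp: blinfun.diff_right)
  have B2: "bregman J (-p) x (-v) = D2 x" for x
    unfolding bregman_def D2_def Jneg jv using pv
    by (cases "J x") (auto simp: blinfun.diff_right blinfun.minus_right blinfun.add_right uminus_blinfun.rep_eq)
  have D1nn: "0 \<le> D1 x" for x using ple[of x] unfolding D1_def
    by (cases "J x") auto
  have D2nn: "0 \<le> D2 x" for x using ple[of "-x"] unfolding D2_def Jneg
    by (cases "J x") (auto simp: blinfun.minus_right)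
  have D1sub: "D1 (a + b) \<le> D1 a + D1 b" for a b
    using Jsub[of a b] prp[of a] prp[of b] prp[of "a+b"] unfolding D1_def
    by (cases "J a"; cases "J b"; cases "J (a+b)") (auto simp: blinfun.add_right)
  have D2sub: "D2 (a + b) \<le> D2 a + D2 b" for a b
    using Jsub[of a b] prp[of a] prp[of b] prp[of "a+b"] unfolding D2_def
    by (cases "J a"; cases "J b"; cases "J (a+b)") (auto simp: blinfun.add_right)
  have D1pos: "D1 (c *\<^sub>R x) = ereal c * D1 x" if "c \<ge> 0" for c x
    unfolding D1_def hom using that prp[of x]
    by (cases "J x"; cases "c = 0") (auto simp: blinfun.scaleR_right algebra_simps)
  have D2pos: "D2 (c *\<^sub>R x) = ereal c * D2 x" if "c \<ge> 0" for c x
    unfolding D2_def hom using that prp[of x]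
    by (cases "J x"; cases "c = 0") (auto simp: blinfun.scaleR_right algebra_simps)
  have D1neg: "D1 (c *\<^sub>R x) = ereal (-c) * D2 x" if "c < 0" for c x
    unfolding D1_def D2_def hom using that prp[of x]
    by (cases "J x") (auto simp: blinfun.scaleR_right algebra_simps)
  have D2neg: "D2 (c *\<^sub>R x) = ereal (-c) * D1 x" if "c < 0" for c x
    unfolding D1_def D2_def hom using that prp[of x]
    by (cases "J x") (auto simp: blinfun.scaleR_right algebra_simps)
  define F where "F u = (INF z. D1 (u - z) + D2 z)" for u
  have IC: "infconv (\<lambda>x. bregman J p x v) (\<lambda>x. bregman J (-p) x (-v)) = F"
    unfolding infconv_def F_def B1 B2 by (rule ext) simp
  have Fnn: "0 \<le> F u" for u unfolding F_def
    by (rule INF_greatest) (simp add: D1nn D2nn)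
  have Fle: "F u \<le> D1 (u - z) + D2 z" for u z unfolding F_def
    by (rule INF_lower) simp
  have Fzero: "F u = 0 \<longleftrightarrow> (\<forall>e>0. \<exists>z. D1 (u - z) + D2 z < ereal e)" for u
  proof
    assume "F u = 0"
    show "\<forall>e>0. \<exists>z. D1 (u - z) + D2 z < ereal e"
    proof (intro allI impI)
      fix e :: real assume "e > 0"
      hence "(INF z. D1 (u - z) + D2 z) < ereal e" using \<open>F u = 0\<close> unfolding F_def by simp
      thus "\<exists>z. D1 (u - z) + D2 z < ereal e" by (simp add: INF_less_iff)
    qed
  next
    assume h: "\<forall>e>0. \<exists>z. D1 (u - z) + D2 z < ereal e"
    have "F u \<le> 0 + ereal e" if "e > 0" for e
      using h that Fle[of u] by (metis add_0 order.strict_implies_order order_trans)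
    hence "F u \<le> 0" by (rule ereal_le_epsilon2)
    with Fnn[of u] show "F u = 0" by simp
  qed
  have F0: "F 0 = 0" using Fle[of 0 0] Fnn[of 0] D1_def D2_def J0 by simp
  show ?thesis unfolding IC
  proof
    show "{u. F u = 0} \<noteq> {}" using F0 by auto
  next
    show "subspace {u. F u = 0}" unfolding subspace_def
    proof (intro conjI ballI allI)
      show "0 \<in> {u. F u = 0}" using F0 by simp
    next
      fix x y assume "x \<in> {u. F u = 0}" "y \<in> {u. F u = 0}"
      hence hx: "\<forall>e>0. \<exists>z. D1 (x - z) + D2 z < ereal e"
        and hy: "\<forall>e>0. \<exists>z. D1 (y - z) + D2 z < ereal e" using Fzero by auto
      have "\<exists>z. D1 (x + y - z) + D2 z < ereal e" if "e > 0" for e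
      proof -
        obtain z1 where z1: "D1 (x - z1) + D2 z1 < ereal (e/2)" using hx \<open>e>0\<close> half_gt_zero by blast
        obtain z2 where z2: "D1 (y - z2) + D2 z2 < ereal (e/2)" using hy \<open>e>0\<close> half_gt_zero by blast
        have "D1 (x + y - (z1 + z2)) + D2 (z1 + z2) \<le> (D1 (x - z1) + D1 (y - z2)) + (D2 z1 + D2 z2)"
          using D1sub[of "x - z1" "y - z2"] D2sub[of z1 z2]
          by (intro add_mono) (auto simp: algebra_simps)
        also have "\<dots> = (D1 (x - z1) + D2 z1) + (D1 (y - z2) + D2 z2)"
          by (simp add: ac_simps)
        also have "\<dots> < ereal (e/2) + ereal (e/2)"
          using z1 z2 by (intro ereal_add_strict_mono2) auto
        also have "\<dots> = ereal e" by simp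
        finally show ?thesis by blast
      qed
      thus "x + y \<in> {u. F u = 0}" using Fzero by auto
    next
      fix c :: real and x assume "x \<in> {u. F u = 0}"
      hence hx: "\<forall>e>0. \<exists>z. D1 (x - z) + D2 z < ereal e" using Fzero by auto
      have "\<exists>z. D1 (c *\<^sub>R x - z) + D2 z < ereal e" if "e > 0" for e
      proof -
        have ep: "e / (\<bar>c\<bar> + 1) > 0" using that by simp
        obtain z where z: "D1 (x - z) + D2 z < ereal (e / (\<bar>c\<bar> + 1))" using hx ep by blast
        have gnn: "0 \<le> D1 (x - z) + D2 z" using D1nn D2nn by (simp add: add_nonneg_nonneg)
        obtain g where g: "D1 (x - z) + D2 z = ereal g" "g \<ge> 0"
          using z gnn by (cases "D1 (x - z) + D2 z") auto
        have gl: "g < e / (\<bar>c\<bar> + 1)" using z g by simp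
        have ge: "\<bar>c\<bar> * g < e"
        proof -
          have "\<bar>c\<bar> * g \<le> \<bar>c\<bar> * (e / (\<bar>c\<bar> + 1))" using gl by (intro mult_left_mono) auto
          also have "\<dots> < e" using that by (simp add: field_simps)
          finally show ?thesis .
        qed
        show ?thesis
        proof (cases "c \<ge> 0")
          case True
          have "D1 (c *\<^sub>R x - c *\<^sub>R z) + D2 (c *\<^sub>R z) = ereal c * (D1 (x - z) + D2 z)"
            using D1pos[OF True, of "x - z"] D2pos[OF True, of z] D1nn D2nn
            by (simp add: scaleR_diff_right ereal_right_distrib)
          also have "\<dots> = ereal (c * g)" using g by simp
          also have "\<dots> < ereal e" using ge True by simp
          finally show ?thesis by blast
        next
          case False
          hence cn: "c < 0" by simp
          have "D1 (c *\<^sub>R x - c *\<^sub>R (x - z)) + D2 (c *\<^sub>R (x - z)) = ereal (-c) * (D1 (x - z) + D2 z)"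
            using D1neg[OF cn, of z] D2neg[OF cn, of "x - z"] D1nn D2nn
            by (simp add: scaleR_diff_right ereal_right_distrib add.commute)
          also have "\<dots> = ereal (-c * g)" using g by simp
          also have "\<dots> < ereal e" using ge cn by simp
          finally show ?thesis by blast
        qed
      qed
      thus "c *\<^sub>R x \<in> {u. F u = 0}" using Fzero by auto
    qed
  qed
qed

end
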